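(* Consider the networked SIR model with isolation on an undirected graph with nodes $\{1,\dots,n\}$ and adjacency matrix $A=(a_{ij})$, with infection rates $\beta_i>0$, natural recovery rates $\delta_i>0$, and isolation times following phase-type distributions $(u_1,\Pi_i)$, $\Pi_i\in\mathbb R^{p\times p}$. Let $\Pi_i'=\Pi_i-\delta_iI_p$, $w_i'=-\Pi_i'\mathbf 1_p$, and let $J,B$ be the $n\times n$ diagonal matrices with $J_{ii}=S_i(0)$, $B_{ii}=\beta_i$. Let $\bar\lambda>0$ be given. If there exists an entrywise positive vector $v\in\mathbb R^{np}$ such that $$v^\top\Big(\bigoplus_{i=1}^n(\Pi_i')^\top+(JBA)\otimes(u_1\mathbf 1_p^\top)\Big)+\mathbf 1_n^\top\bigoplus_{i=1}^n(w_i')^\top<0\qquad\text{and}\qquad v^\top\tilde I(0)<\bar\lambda+\sigma_I(0),$$ then $\lambda<\bar\lambda$.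
   Context: Phase-type distribution $(\phi,\Pi)$: the distribution of the absorption time of a continuous-time Markov process on states $1,\dots,p+1$ ($1,\dots,p$ transient, $p+1$ absorbing) with generator $\begin{bmatrix}\Pi&w\\0&0\end{bmatrix}$, $w=-\Pi\mathbf 1_p$, $\Pi$ an invertible Metzler matrix with nonpositive row sums, and initial distribution $(\phi,0)$. SIR model with isolation: each node $i$ is at each time in exactly one of the states susceptible, infected, removed, with $\{0,1\}$-indicators $S_i(t),I_i(t),R_i(t)$. A susceptible node $i$ becomes infected with instantaneous rate $\beta_i\sum_j a_{ij}I_j(t)$. Once node $i$ becomes infected, it is removed after a time $Z_i=\min(X_i,Y_i)$, where $X_i$ is exponential with rate $\delta_i$ (natural recovery), $Y_i$ (isolation/quarantine time) follows the phase-type distribution $(u_1,\Pi_i)$, and these are independent of each other and of the rest of the process; removed nodes stay removed. At time $0$ each node is either susceptible or infected (known). $\sigma_I(t),\sigma_R(t)$ are the numbers of infected and removed nodes at time $t$, and $\lambda=\lim_{t\to\infty}E[\sigma_R(t)]-\sigma_I(0)$. $\tilde I(0)\in\mathbb R^{np}$ is the stacked vector $[\tilde I_1(0)^\top,\dots,\tilde I_n(0)^\top]^\top$ with $\tilde I_i(0)=u_1$ if node $i$ is infected at time $0$ and $\tilde I_i(0)=0$ otherwise. $u_1$ is the first canonical basis vector of $\mathbb R^p$, $\mathbf 1_k$ the all-ones vector in $\mathbb R^k$, $\otimes$ the Kronecker product, and $\bigoplus_{i=1}^n M_i$ the block-diagonal matrix with diagonal blocks $M_1,\dots,M_n$. Vector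 inequalities are entrywise. *)

theory Defs
  imports Complex_Main
begin

text \<open>An m x k matrix is a function M :: nat => nat => real, read only on indices i < m, j < k.
  Vectors are functions nat => real. Indices start at 0.\<close>

definition mmul :: "nat \<Rightarrow> (nat \<Rightarrow> nat \<Rightarrow> real) \<Rightarrow> (nat \<Rightarrow> nat \<Rightarrow> real) \<Rightarrow> nat \<Rightarrow> nat \<Rightarrow> real" where
  "mmul m M N i j = (\<Sum>k<m. M i k * N k j)"

definition idm :: "nat \<Rightarrow> nat \<Rightarrow> real" where
  "idm i j = (if i = j then 1 else 0)"

definition diagm :: "(nat \<Rightarrow> real) \<Rightarrow> nat \<Rightarrow> nat \<Rightarrow> real" where
  "diagm d i j = (if i = j then d i else 0)"

definition transp :: "(nat \<Rightarrow> nat \<Rightarrow> real) \<Rightarrow> nat \<Rightarrow> nat \<Rightarrow> real" where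
  "transp M i j = M j i"

definition kron :: "nat \<Rightarrow> nat \<Rightarrow> (nat \<Rightarrow> nat \<Rightarrow> real) \<Rightarrow> (nat \<Rightarrow> nat \<Rightarrow> real) \<Rightarrow> nat \<Rightarrow> nat \<Rightarrow> real" where
  "kron q r M N i j = M (i div q) (j div r) * N (i mod q) (j mod r)"

definition bdiag :: "nat \<Rightarrow> nat \<Rightarrow> (nat \<Rightarrow> nat \<Rightarrow> nat \<Rightarrow> real) \<Rightarrow> nat \<Rightarrow> nat \<Rightarrow> real" where
  "bdiag r c F i j = (if i div r = j div c then F (i div r) (i mod r) (j mod c) else 0)"

definition madd :: "(nat \<Rightarrow> nat \<Rightarrow> real) \<Rightarrow> (nat \<Rightarrow> nat \<Rightarrow> real) \<Rightarrow> nat \<Rightarrow> nat \<Rightarrow> real" where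
  "madd M N i j = M i j + N i j"

definition vmul :: "nat \<Rightarrow> (nat \<Rightarrow> real) \<Rightarrow> (nat \<Rightarrow> nat \<Rightarrow> real) \<Rightarrow> nat \<Rightarrow> real" where
  "vmul m x M j = (\<Sum>i<m. x i * M i j)"

definition invertible_sq :: "nat \<Rightarrow> (nat \<Rightarrow> nat \<Rightarrow> real) \<Rightarrow> bool" where
  "invertible_sq m M \<longleftrightarrow> (\<exists>N. \<forall>i<m. \<forall>j<m. mmul m M N i j = idm i j \<and> mmul m N M i j = idm i j)"

definition metzler :: "nat \<Rightarrow> (nat \<Rightarrow> nat \<Rightarrow> real) \<Rightarrow> bool" where
  "metzler m M \<longleftrightarrow> (\<forall>i<m. \<forall>j<m. i \<noteq> j \<longrightarrow> M i j \<ge> 0)"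

text \<open>First canonical basis vector u_1 (index 0) and the all-ones vector.\<close>
definition u1 :: "nat \<Rightarrow> real" where "u1 k = (if k = 0 then 1 else 0)"
definition ones :: "nat \<Rightarrow> real" where "ones k = 1"

text \<open>Local state of a node: susceptible, infected with the isolation clock in phase k
  (phases 0..p-1; phase 0 corresponds to u_1), removed.  Since the time to removal is
  min(X_i, Y_i) with X_i ~ Exp(delta_i) independent of the phase-type Y_i ~ (u_1, Pi_i),
  an infected node in phase k jumps to phase l (l ~= k) with rate Pi_i k l and to removed
  with rate delta_i + w_i k, w_i = - Pi_i 1.\<close>
datatype lstate = Sus | Inf nat | Rem

definition is_inf :: "lstate \<Rightarrow> bool" where
  "is_inf s = (case s of Inf _ \<Rightarrow> True | _ \<Rightarrow> False)"

definition states :: "nat \<Rightarrow> nat \<Rightarrow> (nat \<Rightarrow> lstate) set" where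
  "states n p = {x. (\<forall>i<n. x i = Sus \<or> x i = Rem \<or> (\<exists>k<p. x i = Inf k)) \<and> (\<forall>i\<ge>n. x i = Sus)}"

definition lrate :: "nat \<Rightarrow> nat \<Rightarrow> (nat \<Rightarrow> nat \<Rightarrow> real) \<Rightarrow> (nat \<Rightarrow> real) \<Rightarrow> (nat \<Rightarrow> real)
    \<Rightarrow> (nat \<Rightarrow> nat \<Rightarrow> nat \<Rightarrow> real) \<Rightarrow> nat \<Rightarrow> (nat \<Rightarrow> lstate) \<Rightarrow> lstate \<Rightarrow> lstate \<Rightarrow> real" where
  "lrate n p A beta delta Pi i x s s' =
     (case s of
        Sus \<Rightarrow> (case s' of
                  Inf l \<Rightarrow> (if l = 0 then beta i * (\<Sum>j<n. A i j * (if is_inf (x j) then 1 else 0)) else 0)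
                | _ \<Rightarrow> 0)
      | Inf k \<Rightarrow> (case s' of
                  Inf l \<Rightarrow> (if l \<noteq> k \<and> l < p then Pi i k l else 0)
                | Rem \<Rightarrow> delta i - (\<Sum>l<p. Pi i k l)
                | Sus \<Rightarrow> 0)
      | Rem \<Rightarrow> 0)"

definition rate :: "nat \<Rightarrow> nat \<Rightarrow> (nat \<Rightarrow> nat \<Rightarrow> real) \<Rightarrow> (nat \<Rightarrow> real) \<Rightarrow> (nat \<Rightarrow> real)
    \<Rightarrow> (nat \<Rightarrow> nat \<Rightarrow> nat \<Rightarrow> real) \<Rightarrow> (nat \<Rightarrow> lstate) \<Rightarrow> (nat \<Rightarrow> lstate) \<Rightarrow> real" where
  "rate n p A beta delta Pi x y =
     (\<Sum>i<n. if x i \<noteq> y i \<and> y = x(i := y i) then lrate n p A beta delta Pi i x (x i) (y i) else 0)"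

definition gen :: "nat \<Rightarrow> nat \<Rightarrow> (nat \<Rightarrow> nat \<Rightarrow> real) \<Rightarrow> (nat \<Rightarrow> real) \<Rightarrow> (nat \<Rightarrow> real)
    \<Rightarrow> (nat \<Rightarrow> nat \<Rightarrow> nat \<Rightarrow> real) \<Rightarrow> (nat \<Rightarrow> lstate) \<Rightarrow> (nat \<Rightarrow> lstate) \<Rightarrow> real" where
  "gen n p A beta delta Pi x y =
     (if x = y then - (\<Sum>z\<in>states n p - {x}. rate n p A beta delta Pi x z)
      else rate n p A beta delta Pi x y)"

fun mpow :: "'s set \<Rightarrow> ('s \<Rightarrow> 's \<Rightarrow> real) \<Rightarrow> nat \<Rightarrow> 's \<Rightarrow> 's \<Rightarrow> real" where
  "mpow S Q 0 x y = (if x = y then 1 else 0)"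
| "mpow S Q (Suc k) x y = (\<Sum>z\<in>S. mpow S Q k x z * Q z y)"

definition trans_prob :: "'s set \<Rightarrow> ('s \<Rightarrow> 's \<Rightarrow> real) \<Rightarrow> real \<Rightarrow> 's \<Rightarrow> 's \<Rightarrow> real" where
  "trans_prob S Q t x y = (\<Sum>k. t ^ k / fact k * mpow S Q k x y)"

definition init_state :: "nat \<Rightarrow> (nat \<Rightarrow> bool) \<Rightarrow> nat \<Rightarrow> lstate" where
  "init_state n inf0 i = (if i < n \<and> inf0 i then Inf 0 else Sus)"

definition exp_removed :: "nat \<Rightarrow> nat \<Rightarrow> (nat \<Rightarrow> nat \<Rightarrow> real) \<Rightarrow> (nat \<Rightarrow> real) \<Rightarrow> (nat \<Rightarrow> real)
    \<Rightarrow> (nat \<Rightarrow> nat \<Rightarrow> nat \<Rightarrow> real) \<Rightarrow> (nat \<Rightarrow> bool) \<Rightarrow> real \<Rightarrow> real" where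
  "exp_removed n p A beta delta Pi inf0 t =
     (\<Sum>y\<in>states n p. trans_prob (states n p) (gen n p A beta delta Pi) t (init_state n inf0) y
                        * real (card {i. i < n \<and> y i = Rem}))"

definition sigmaI0 :: "nat \<Rightarrow> (nat \<Rightarrow> bool) \<Rightarrow> real" where
  "sigmaI0 n inf0 = real (card {i. i < n \<and> inf0 i})"

definition epidemic_lambda :: "nat \<Rightarrow> nat \<Rightarrow> (nat \<Rightarrow> nat \<Rightarrow> real) \<Rightarrow> (nat \<Rightarrow> real) \<Rightarrow> (nat \<Rightarrow> real)
    \<Rightarrow> (nat \<Rightarrow> nat \<Rightarrow> nat \<Rightarrow> real) \<Rightarrow> (nat \<Rightarrow> bool) \<Rightarrow> real" where
  "epidemic_lambda n p A beta delta Pi inf0 =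
     Lim at_top (exp_removed n p A beta delta Pi inf0) - sigmaI0 n inf0"

end

theory Submission
  imports Defs
begin

lemma mpow_Suc_left:
  assumes fin: "finite S" and "x \<in> S" "y \<in> S"
  shows "mpow S Q (Suc k) x y = (\<Sum>z\<in>S. Q x z * mpow S Q k z y)"
  using assms(3)
proof (induction k arbitrary: y)
  case 0
  have "(\<Sum>z\<in>S. (if x = z then 1 else 0) * Q z y) = (\<Sum>z\<in>S. if x = z then Q z y else 0)"
    by (rule sum.cong) auto
  moreover have "(\<Sum>z\<in>S. Q x z * (if z = y then 1 else 0)) = (\<Sum>z\<in>S. if z = y then Q x z else 0)"
    by (rule sum.cong) auto
  ultimately show ?case using fin assms(2) 0 by (simp add: sum.delta sum.delta')
next
  case (Suc k)
  have "mpow S Q (Suc (Suc k)) x y = (\<Sum>z\<in>S. mpow S Q (Suc k) x z * Q z y)"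
    by (simp only: mpow.simps)
  also have "\<dots> = (\<Sum>z\<in>S. (\<Sum>w\<in>S. Q x w * mpow S Q k w z) * Q z y)"
    by (rule sum.cong[OF refl], subst Suc.IH) auto
  also have "\<dots> = (\<Sum>z\<in>S. \<Sum>w\<in>S. Q x w * mpow S Q k w z * Q z y)"
    by (simp only: sum_distrib_right)
  also have "\<dots> = (\<Sum>w\<in>S. \<Sum>z\<in>S. Q x w * mpow S Q k w z * Q z y)"
    by (rule sum.swap)
  also have "\<dots> = (\<Sum>w\<in>S. Q x w * (\<Sum>z\<in>S. mpow S Q k w z * Q z y))"
    by (simp only: sum_distrib_left mult.assoc)
  finally show ?case by (simp only: mpow.simps)
qed

definition Tc :: "real \<Rightarrow> nat \<Rightarrow> nat \<Rightarrow> real" where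
  "Tc c m j = real (m choose j) * c ^ j * (- c) ^ (m - j)"

lemma pascal_seq:
  fixes A :: "nat \<Rightarrow> real"
  shows "(\<Sum>j\<le>m. Tc c m j * (c * A (Suc j) - c * A j)) = (\<Sum>j\<le>Suc m. Tc c (Suc m) j * A j)"
proof -
  have T1: "Tc c (Suc m) (Suc j) = c * Tc c m j + (- c) * Tc c m (Suc j)" if "j \<le> m" for j
  proof (cases "j = m")
    case True then show ?thesis by (simp add: Tc_def)
  next
    case False
    then have "m - j = Suc (m - Suc j)" using that by simp
    then show ?thesis by (simp add: Tc_def algebra_simps)
  qed
  have T0: "Tc c (Suc m) 0 = (- c) * Tc c m 0" by (simp add: Tc_def)
  have Tz: "Tc c m (Suc m) = 0" by (simp add: Tc_def)
  have "(\<Sum>j\<le>Suc m. Tc c (Suc m) j * A j) = Tc c (Suc m) 0 * A 0 + (\<Sum>j\<le>m. Tc c (Suc m) (Suc j) * A (Suc j))"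
    by (rule sum.atMost_Suc_shift)
  also have "\<dots> = (- c) * Tc c m 0 * A 0 + (\<Sum>j\<le>m. c * Tc c m j * A (Suc j) + (- c) * Tc c m (Suc j) * A (Suc j))"
    using T0 by (intro arg_cong2[where f="(+)"] sum.cong) (auto simp: T1 algebra_simps)
  also have "\<dots> = (\<Sum>j\<le>m. c * Tc c m j * A (Suc j)) + ((- c) * Tc c m 0 * A 0 + (\<Sum>j\<le>m. (- c) * Tc c m (Suc j) * A (Suc j)))"
    by (simp add: sum.distrib[symmetric] sum_negf[symmetric])
  also have "(- c) * Tc c m 0 * A 0 + (\<Sum>j\<le>m. (- c) * Tc c m (Suc j) * A (Suc j)) = (\<Sum>j\<le>Suc m. (- c) * Tc c m j * A j)"
    by (rule sum.atMost_Suc_shift[symmetric])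
  also have "\<dots> = (\<Sum>j\<le>m. (- c) * Tc c m j * A j)" using Tz by simp
  finally have eq: "(\<Sum>j\<le>Suc m. Tc c (Suc m) j * A j) = (\<Sum>j\<le>m. c * Tc c m j * A (Suc j)) + (\<Sum>j\<le>m. (- c) * Tc c m j * A j)" .
  show ?thesis unfolding eq sum.distrib[symmetric] by (rule sum.cong) (auto simp: algebra_simps)
qed

lemma mpow_binom:
  assumes fin: "finite S" and c: "c \<noteq> 0" and x: "x \<in> S" and y: "y \<in> S"
  and K: "\<And>x y. K x y = (if x = y then 1 else 0) + Q x y / c"
  shows "mpow S Q m x y = (\<Sum>j\<le>m. Tc c m j * mpow S K j x y)"
  using y
proof (induction m arbitrary: y)
  case 0
  then show ?case by (simp add: Tc_def)
next
  case (Suc m)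
  have Q: "Q z y = c * K z y - c * (if z = y then 1 else 0)" for z y using c by (simp add: K algebra_simps)
  have "mpow S Q (Suc m) x y = (\<Sum>z\<in>S. mpow S Q m x z * Q z y)" by simp
  also have "\<dots> = (\<Sum>z\<in>S. (\<Sum>j\<le>m. Tc c m j * mpow S K j x z) * (c * K z y - c * (if z = y then 1 else 0)))"
    apply (rule sum.cong[OF refl]) using Suc.IH by (metis Q)
  also have "\<dots> = (\<Sum>j\<le>m. Tc c m j * (c * (\<Sum>z\<in>S. mpow S K j x z * K z y) - c * (\<Sum>z\<in>S. mpow S K j x z * (if z = y then 1 else 0))))"
    unfolding sum_distrib_right
    apply (subst sum.swap)
    apply (rule sum.cong[OF refl])
    by (simp add: sum_distrib_left right_diff_distrib sum_subtractf mult.assoc mult.left_commute)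
  also have "\<dots> = (\<Sum>j\<le>m. Tc c m j * (c * mpow S K (Suc j) x y - c * mpow S K j x y))"
    using fin Suc.prems by (simp add: if_distrib[of "\<lambda>t. _ * t"] sum.delta' cong: if_cong)
  also have "\<dots> = (\<Sum>j\<le>Suc m. Tc c (Suc m) j * mpow S K j x y)"
    by (rule pascal_seq)
  finally show ?case .
qed

lemma Kpow_bounds:
  assumes fin: "finite S" and Knn: "\<And>x y. x \<in> S \<Longrightarrow> y \<in> S \<Longrightarrow> 0 \<le> K x y"
    and Krow: "\<And>x. x \<in> S \<Longrightarrow> (\<Sum>y\<in>S. K x y) = 1"
  shows "x \<in> S \<Longrightarrow> y \<in> S \<Longrightarrow> 0 \<le> mpow S K j x y"
    and "x \<in> S \<Longrightarrow> (\<Sum>y\<in>S. mpow S K j x y) = 1"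
    and "x \<in> S \<Longrightarrow> y \<in> S \<Longrightarrow> mpow S K j x y \<le> 1"
proof -
  show nn: "0 \<le> mpow S K j x y" if "x \<in> S" "y \<in> S" for x y j
    using that by (induction j arbitrary: y) (auto intro!: sum_nonneg mult_nonneg_nonneg Knn)
  show rs: "(\<Sum>y\<in>S. mpow S K j x y) = 1" if "x \<in> S" for x j
  proof (induction j)
    case 0 then show ?case using fin that by (simp add: sum.delta)
  next
    case (Suc j)
    have "(\<Sum>y\<in>S. mpow S K (Suc j) x y) = (\<Sum>y\<in>S. \<Sum>z\<in>S. mpow S K j x z * K z y)"
      by (simp only: mpow.simps)
    also have "\<dots> = (\<Sum>z\<in>S. \<Sum>y\<in>S. mpow S K j x z * K z y)"
      by (rule sum.swap)
    also have "\<dots> = (\<Sum>z\<in>S. mpow S K j x z * (\<Sum>y\<in>S. K z y))"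
      by (simp only: sum_distrib_left)
    also have "\<dots> = (\<Sum>z\<in>S. mpow S K j x z)" by (rule sum.cong) (auto simp: Krow)
    finally show ?case using Suc by simp
  qed
  show "mpow S K j x y \<le> 1" if "x \<in> S" "y \<in> S"
  proof -
    have "mpow S K j x y \<le> (\<Sum>y\<in>S. mpow S K j x y)"
      using that fin by (intro member_le_sum nn) auto
    then show ?thesis using rs that by simp
  qed
qed

lemma arith_aux: "F \<noteq> 0 \<Longrightarrow> G \<noteq> 0 \<Longrightarrow> H \<noteq> 0 \<Longrightarrow>
  A * B / F * (F / (G * H) * P * Q) * M = P * A / G * M * (Q * B / H)" for A B F G H P Q M :: real
  by (simp add: field_simps)

lemma uniformization:
  assumes fin: "finite S" and c: "c > 0"
    and K: "\<And>x y. K x y = (if x = y then 1 else 0) + Q x y / c"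
    and Knn: "\<And>x y. x \<in> S \<Longrightarrow> y \<in> S \<Longrightarrow> 0 \<le> K x y"
    and Krow: "\<And>x. x \<in> S \<Longrightarrow> (\<Sum>y\<in>S. K x y) = 1"
    and x: "x \<in> S" and y: "y \<in> S"
  shows "summable (\<lambda>j. (c * t) ^ j / fact j * mpow S K j x y)"
    and "trans_prob S Q t x y = exp (- (c * t)) * (\<Sum>j. (c * t) ^ j / fact j * mpow S K j x y)"
proof -
  define a where "a j = (c * t) ^ j / fact j * mpow S K j x y" for j
  define b where "b j = (- (c * t)) ^ j / fact j" for j :: nat
  have bnd: "0 \<le> mpow S K j x y" "mpow S K j x y \<le> 1" for j
    using Kpow_bounds[OF fin Knn Krow] x y by auto
  have se: "summable (\<lambda>j. \<bar>c * t\<bar> ^ j / fact j)"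
    using summable_exp[of "\<bar>c * t\<bar>"] by (simp add: divide_inverse mult.commute)
  have na: "summable (\<lambda>j. norm (a j))"
  proof (rule summable_comparison_test[OF _ se])
    show "\<exists>N. \<forall>n\<ge>N. norm (norm (a n)) \<le> \<bar>c * t\<bar> ^ n / fact n"
    proof (intro exI[of _ 0] allI impI)
      fix n :: nat
      have "\<bar>c * t\<bar> ^ n * mpow S K n x y \<le> \<bar>c * t\<bar> ^ n"
        using bnd by (intro mult_left_le) auto
      then show "norm (norm (a n)) \<le> \<bar>c * t\<bar> ^ n / fact n"
        using bnd[of n] by (simp add: a_def abs_mult power_abs divide_right_mono)
    qed
  qed
  then show "summable (\<lambda>j. (c * t) ^ j / fact j * mpow S K j x y)"
    unfolding a_def[symmetric] by (rule summable_norm_cancel)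
  have nb: "summable (\<lambda>j. norm (b j))"
    using se by (simp add: b_def abs_mult power_abs)
  have sb: "(\<Sum>j. b j) = exp (- (c * t))"
    using exp_converges[of "- (c * t)"] by (simp add: b_def sums_iff divide_inverse mult.commute)
  have cp: "(\<lambda>k. \<Sum>i\<le>k. a i * b (k - i)) sums ((\<Sum>k. a k) * (\<Sum>k. b k))"
    by (rule Cauchy_product_sums[OF na nb])
  have trm: "(\<Sum>i\<le>k. a i * b (k - i)) = t ^ k / fact k * mpow S Q k x y" for k
  proof -
    have "mpow S Q k x y = (\<Sum>j\<le>k. Tc c k j * mpow S K j x y)"
      using mpow_binom[OF fin _ x y K] c by simp
    then have "t ^ k / fact k * mpow S Q k x y = (\<Sum>i\<le>k. t ^ k / fact k * Tc c k i * mpow S K i x y)"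
      by (simp add: sum_distrib_left mult.assoc)
    also have "\<dots> = (\<Sum>i\<le>k. a i * b (k - i))"
    proof (rule sum.cong[OF refl])
      fix i assume "i \<in> {..k}"
      then have ik: "i \<le> k" by simp
      have tk: "t ^ k = t ^ i * t ^ (k - i)" using ik by (simp add: power_add[symmetric])
      have bf: "real (k choose i) = fact k / (fact i * fact (k - i))" using binomial_fact[OF ik] by simp
      show "t ^ k / fact k * Tc c k i * mpow S K i x y = a i * b (k - i)"
        unfolding a_def b_def Tc_def bf tk power_mult_distrib minus_mult_left
        by (rule arith_aux) auto
    qed
    finally show ?thesis by simp
  qed
  have "(\<lambda>k. t ^ k / fact k * mpow S Q k x y) sums ((\<Sum>k. a k) * exp (- (c * t)))"
    using cp unfolding trm sb .
  then show "trans_prob S Q t x y = exp (- (c * t)) * (\<Sum>j. (c * t) ^ j / fact j * mpow S K j x y)"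
    unfolding trans_prob_def a_def by (simp add: sums_iff mult.commute)
qed

lemma exp_series_sums: "(\<lambda>j. u ^ j / fact j) sums exp (u::real)"
  using exp_converges[of u] by (simp add: divide_inverse mult.commute)

lemma poisson_part_tendsto:
  assumes c: "c > (0::real)"
  shows "((\<lambda>t. exp (- (c * t)) * (\<Sum>j<N. (c * t) ^ j / fact j)) \<longlongrightarrow> 0) at_top"
proof -
  have lim: "filterlim (\<lambda>t. c * t) at_top at_top"
    by (rule filterlim_tendsto_pos_mult_at_top[OF tendsto_const c filterlim_ident])
  have "((\<lambda>t. \<Sum>j<N. (c * t) ^ j / exp (c * t) / fact j) \<longlongrightarrow> (\<Sum>j<N. 0 / fact j)) at_top"
    by (intro tendsto_sum tendsto_divide tendsto_const filterlim_compose[OF tendsto_power_div_exp_0 lim]) auto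
  then show ?thesis
    by (simp add: sum_distrib_left exp_minus field_simps)
qed

lemma lin_aux: "bN - X \<le> ft \<Longrightarrow> X < (L - a) / 2 \<Longrightarrow> (a + L) / 2 < bN \<Longrightarrow> a < (ft::real)"
  by argo

lemma poisson_limit:
  fixes b :: "nat \<Rightarrow> real"
  assumes c: "c > 0" and inc: "incseq b" and bnd: "\<forall>j. b j \<le> B"
  obtains L where "\<forall>j. b j \<le> L" and "L \<le> B"
    and "((\<lambda>t. exp (- (c * t)) * (\<Sum>j. (c * t) ^ j / fact j * b j)) \<longlongrightarrow> L) at_top"
proof -
  obtain L where bL: "b \<longlonglongrightarrow> L" and bleL: "\<forall>j. b j \<le> L"
    using incseq_convergent[OF inc bnd] by blast
  define f where "f t = exp (- (c * t)) * (\<Sum>j. (c * t) ^ j / fact j * b j)" for t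
  have b0: "b 0 \<le> b j" for j using inc by (simp add: incseq_def)
  have summ: "summable (\<lambda>j. u ^ j / fact j * b j)" if "u \<ge> 0" for u :: real
  proof (rule summable_comparison_test[of _ "\<lambda>j. u ^ j / fact j * (\<bar>b 0\<bar> + \<bar>L\<bar>)"])
    show "summable (\<lambda>j. u ^ j / fact j * (\<bar>b 0\<bar> + \<bar>L\<bar>))"
      using exp_series_sums[of u] by (intro summable_mult2) (simp add: sums_iff)
    show "\<exists>N. \<forall>n\<ge>N. norm (u ^ n / fact n * b n) \<le> u ^ n / fact n * (\<bar>b 0\<bar> + \<bar>L\<bar>)"
    proof (intro exI[of _ 0] allI impI)
      fix n
      have "\<bar>b n\<bar> \<le> \<bar>b 0\<bar> + \<bar>L\<bar>" using b0[of n] bleL[rule_format, of n] by arith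
      then show "norm (u ^ n / fact n * b n) \<le> u ^ n / fact n * (\<bar>b 0\<bar> + \<bar>L\<bar>)"
        using that by (simp add: abs_mult mult_left_mono divide_right_mono)
    qed
  qed
  have ex: "exp (- u) * exp u = 1" for u :: real by (simp add: exp_minus)
  have upper: "f t \<le> L" if "t \<ge> 0" for t
  proof -
    have u: "c * t \<ge> 0" using c that by simp
    have sL: "summable (\<lambda>j. (c * t) ^ j / fact j * L)"
      using exp_series_sums[of "c*t"] by (intro summable_mult2) (simp add: sums_iff)
    have "(\<Sum>j. (c * t) ^ j / fact j * b j) \<le> (\<Sum>j. (c * t) ^ j / fact j * L)"
      using summ[OF u] sL bleL u
      by (intro suminf_le mult_left_mono) auto
    also have "\<dots> = exp (c * t) * L"
      by (rule sums_unique[symmetric, OF sums_mult2[OF exp_series_sums]])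
    finally have "exp (- (c * t)) * (\<Sum>j. (c * t) ^ j / fact j * b j) \<le> exp (- (c * t)) * (exp (c * t) * L)"
      by (rule mult_left_mono) simp
    also have "\<dots> = (exp (- (c * t)) * exp (c * t)) * L" by (simp only: mult_ac)
    finally show ?thesis unfolding f_def using ex[of "c*t"] by simp
  qed
  have lower: "f t \<ge> b N - (b N - b 0) * (exp (- (c * t)) * (\<Sum>j<N. (c * t) ^ j / fact j))"
    if "t \<ge> 0" for t N
  proof -
    have u: "c * t \<ge> 0" using c that by simp
    define d where "d j = (if j < N then b N - b 0 else 0)" for j
    have bd: "b N - d j \<le> b j" for j
      using inc b0[of j] unfolding d_def incseq_def by (cases "j < N") auto
    have s1: "summable (\<lambda>j. (c * t) ^ j / fact j * b N)"
      using exp_series_sums[of "c*t"] by (intro summable_mult2) (simp add: sums_iff)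
    have fin: "(\<Sum>j. (c * t) ^ j / fact j * d j) = (\<Sum>j<N. (c * t) ^ j / fact j * (b N - b 0))"
    proof -
      have "(\<Sum>j. (c * t) ^ j / fact j * d j) = (\<Sum>j<N. (c * t) ^ j / fact j * d j)"
        by (rule suminf_finite) (auto simp: d_def)
      then show ?thesis by (simp add: d_def)
    qed
    have s2: "summable (\<lambda>j. (c * t) ^ j / fact j * d j)"
      by (rule summable_finite[of "{..<N}"]) (auto simp: d_def)
    have "(\<Sum>j. (c * t) ^ j / fact j * (b N - d j)) \<le> (\<Sum>j. (c * t) ^ j / fact j * b j)"
      using summ[OF u] s1 s2 bd u
      by (intro suminf_le mult_left_mono) (auto simp: right_diff_distrib intro: summable_diff)
    moreover have "(\<Sum>j. (c * t) ^ j / fact j * (b N - d j)) = exp (c * t) * b N - (\<Sum>j<N. (c * t) ^ j / fact j) * (b N - b 0)"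
    proof -
      have "(\<Sum>j. (c * t) ^ j / fact j * (b N - d j)) = (\<Sum>j. (c * t) ^ j / fact j * b N - (c * t) ^ j / fact j * d j)"
        by (simp add: right_diff_distrib)
      also have "\<dots> = (\<Sum>j. (c * t) ^ j / fact j * b N) - (\<Sum>j. (c * t) ^ j / fact j * d j)"
        by (rule suminf_diff[OF s1 s2, symmetric])
      also have "(\<Sum>j. (c * t) ^ j / fact j * b N) = exp (c * t) * b N"
        by (rule sums_unique[symmetric, OF sums_mult2[OF exp_series_sums]])
      finally show ?thesis unfolding fin by (simp add: sum_distrib_right)
    qed
    ultimately have "exp (c * t) * b N - (\<Sum>j<N. (c * t) ^ j / fact j) * (b N - b 0) \<le> (\<Sum>j. (c * t) ^ j / fact j * b j)"
      by simp
    from mult_left_mono[OF this, of "exp (- (c * t))"]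
    have "exp (- (c * t)) * (exp (c * t) * b N - (\<Sum>j<N. (c * t) ^ j / fact j) * (b N - b 0)) \<le> f t"
      unfolding f_def by simp
    moreover have "exp (- (c * t)) * (exp (c * t) * b N - (\<Sum>j<N. (c * t) ^ j / fact j) * (b N - b 0))
       = (exp (- (c * t)) * exp (c * t)) * b N - (b N - b 0) * (exp (- (c * t)) * (\<Sum>j<N. (c * t) ^ j / fact j))"
      by (simp only: right_diff_distrib mult_ac)
    ultimately show ?thesis using ex[of "c*t"] by simp
  qed
  have "(f \<longlongrightarrow> L) at_top"
  proof (rule order_tendstoI)
    fix a assume "a > L"
    show "eventually (\<lambda>t. f t < a) at_top"
    proof (rule eventually_mono[OF eventually_ge_at_top[of "0::real"]])
      fix t :: real assume "0 \<le> t" then show "f t < a" using upper[of t] \<open>a > L\<close> by linarith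
    qed
  next
    fix a assume aL: "a < L"
    obtain N where bN: "b N > (a + L) / 2"
      using order_tendstoD(1)[OF bL, of "(a + L) / 2"] aL eventually_sequentially by force
    have "\<forall>\<^sub>F t in at_top. (b N - b 0) * (exp (- (c * t)) * (\<Sum>j<N. (c * t) ^ j / fact j)) < (L - a) / 2"
    proof (rule order_tendstoD(2))
      show "((\<lambda>t. (b N - b 0) * (exp (- (c * t)) * (\<Sum>j<N. (c * t) ^ j / fact j))) \<longlongrightarrow> 0) at_top"
        using tendsto_mult[OF tendsto_const poisson_part_tendsto[OF c, of N], of "b N - b 0"] by simp
      show "0 < (L - a) / 2" using aL by simp
    qed
    then show "eventually (\<lambda>t. a < f t) at_top"
      using eventually_ge_at_top[of 0]
    proof eventually_elim
      case (elim t)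
      show ?case by (rule lin_aux[OF lower[of t N, OF elim(2)] elim(1) bN])
    qed
  qed
  moreover have "L \<le> B" using LIMSEQ_le_const2[OF bL] bnd by auto
  ultimately show ?thesis using that bleL unfolding f_def by blast
qed

lemma sum_split_idx:
  fixes f :: "nat \<Rightarrow> 'a::comm_monoid_add"
  shows "sum f {..<n * p} = (\<Sum>i<n. \<Sum>l<p. f (i * p + l))"
proof (induction n)
  case 0 then show ?case by simp
next
  case (Suc n)
  have "sum f {..<Suc n * p} = sum f {0..<n * p + p}"
    by (simp add: atLeast0LessThan add.commute)
  also have "\<dots> = sum f {0..<n * p} + sum f {n * p..<n * p + p}"
    by (rule sum.atLeastLessThan_concat[symmetric]) auto
  also have "sum f {n * p..<n * p + p} = (\<Sum>l<p. f (n * p + l))"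
    using sum.shift_bounds_nat_ivl[of f 0 "n * p" p] by (simp add: atLeast0LessThan add.commute)
  finally show ?case using Suc by (simp add: atLeast0LessThan)
qed

definition Vs :: "nat \<Rightarrow> lstate set" where
  "Vs p = insert Sus (insert Rem (Inf ` {..<p}))"

lemma states_alt: "states n p = {x. \<forall>i. (i \<in> {..<n} \<longrightarrow> x i \<in> Vs p) \<and> (i \<notin> {..<n} \<longrightarrow> x i = Sus)}"
  unfolding states_def
proof (rule Collect_cong)
  fix x
  show "((\<forall>i<n. x i = Sus \<or> x i = Rem \<or> (\<exists>k<p. x i = Inf k)) \<and> (\<forall>i\<ge>n. x i = Sus)) =
    (\<forall>i. (i \<in> {..<n} \<longrightarrow> x i \<in> Vs p) \<and> (i \<notin> {..<n} \<longrightarrow> x i = Sus))"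
  proof
    assume h: "(\<forall>i<n. x i = Sus \<or> x i = Rem \<or> (\<exists>k<p. x i = Inf k)) \<and> (\<forall>i\<ge>n. x i = Sus)"
    show "\<forall>i. (i \<in> {..<n} \<longrightarrow> x i \<in> Vs p) \<and> (i \<notin> {..<n} \<longrightarrow> x i = Sus)"
      using h unfolding Vs_def by auto
  next
    assume h: "\<forall>i. (i \<in> {..<n} \<longrightarrow> x i \<in> Vs p) \<and> (i \<notin> {..<n} \<longrightarrow> x i = Sus)"
    show "(\<forall>i<n. x i = Sus \<or> x i = Rem \<or> (\<exists>k<p. x i = Inf k)) \<and> (\<forall>i\<ge>n. x i = Sus)"
    proof (intro conjI allI impI)
      fix i assume "i < n"
      then have "x i \<in> Vs p" using h by auto
      then show "x i = Sus \<or> x i = Rem \<or> (\<exists>k<p. x i = Inf k)" unfolding Vs_def by auto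
    next
      fix i assume "n \<le> i" then show "x i = Sus" using h by auto
    qed
  qed
qed

lemma finite_states: "finite (states n p)"
  unfolding states_alt by (rule finite_set_of_finite_funs) (auto simp: Vs_def)

lemma finite_Vs: "finite (Vs p)" by (simp add: Vs_def)

lemma states_Vs: "x \<in> states n p \<Longrightarrow> i < n \<Longrightarrow> x i \<in> Vs p"
  unfolding states_alt by auto

lemma sum_Vs: "(\<Sum>s\<in>Vs p. F s) = F Sus + F Rem + (\<Sum>l<p. F (Inf l))"
proof -
  have "(\<Sum>s\<in>Inf ` {..<p}. F s) = (\<Sum>l<p. F (Inf l))"
    using sum.reindex[of Inf "{..<p}" F] by (simp add: inj_on_def)
  then show ?thesis unfolding Vs_def by (simp add: image_iff add.assoc)
qed

lemma update_in_states: "x \<in> states n p \<Longrightarrow> i < n \<Longrightarrow> s \<in> Vs p \<Longrightarrow> x(i := s) \<in> states n p"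
  unfolding states_alt by auto

lemma nbr_set:
  assumes x: "x \<in> states n p" and i: "i < n"
  shows "{y \<in> states n p - {x}. x i \<noteq> y i \<and> y = x(i := y i)} = (\<lambda>s. x(i := s)) ` (Vs p - {x i})"
proof
  show "{y \<in> states n p - {x}. x i \<noteq> y i \<and> y = x(i := y i)} \<subseteq> (\<lambda>s. x(i := s)) ` (Vs p - {x i})"
  proof
    fix y assume "y \<in> {y \<in> states n p - {x}. x i \<noteq> y i \<and> y = x(i := y i)}"
    then have "y \<in> states n p" "x i \<noteq> y i" "y = x(i := y i)" by auto
    then show "y \<in> (\<lambda>s. x(i := s)) ` (Vs p - {x i})"
      using states_Vs[OF _ i] by (intro image_eqI[of _ _ "y i"]) auto
  qed
  show "(\<lambda>s. x(i := s)) ` (Vs p - {x i}) \<subseteq> {y \<in> states n p - {x}. x i \<noteq> y i \<and> y = x(i := y i)}"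
  proof
    fix y assume "y \<in> (\<lambda>s. x(i := s)) ` (Vs p - {x i})"
    then obtain s where s: "s \<in> Vs p" "s \<noteq> x i" "y = x(i := s)" by auto
    then have "y \<noteq> x" by (metis fun_upd_same)
    then show "y \<in> {y \<in> states n p - {x}. x i \<noteq> y i \<and> y = x(i := y i)}"
      using s update_in_states[OF x i] by auto
  qed
qed

lemma gen_additive:
  assumes x: "x \<in> states n p"
  shows "(\<Sum>y\<in>states n p. gen n p A beta delta Pi x y * (\<Sum>i<n. hl i (y i)))
       = (\<Sum>i<n. \<Sum>s\<in>Vs p. lrate n p A beta delta Pi i x (x i) s * (hl i s - hl i (x i)))"
proof -
  let ?S = "states n p"
  let ?r = "rate n p A beta delta Pi"
  let ?lr = "lrate n p A beta delta Pi"
  define h where "h y = (\<Sum>i<n. hl i (y i))" for y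
  have fin: "finite ?S" by (rule finite_states)
  have "(\<Sum>y\<in>?S. gen n p A beta delta Pi x y * h y)
      = gen n p A beta delta Pi x x * h x + (\<Sum>y\<in>?S - {x}. gen n p A beta delta Pi x y * h y)"
    by (rule sum.remove[OF fin x])
  also have "\<dots> = - (\<Sum>y\<in>?S - {x}. ?r x y) * h x + (\<Sum>y\<in>?S - {x}. ?r x y * h y)"
    by (intro arg_cong2[where f="(+)"] sum.cong) (auto simp: gen_def)
  also have "\<dots> = (\<Sum>y\<in>?S - {x}. ?r x y * (h y - h x))"
    by (simp add: sum_distrib_right right_diff_distrib sum_subtractf)
  also have "\<dots> = (\<Sum>y\<in>?S - {x}. \<Sum>i<n. if x i \<noteq> y i \<and> y = x(i := y i) then ?lr i x (x i) (y i) * (h y - h x) else 0)"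
    unfolding rate_def sum_distrib_right by (intro sum.cong refl) auto
  also have "\<dots> = (\<Sum>i<n. \<Sum>y\<in>?S - {x}. if x i \<noteq> y i \<and> y = x(i := y i) then ?lr i x (x i) (y i) * (h y - h x) else 0)"
    by (rule sum.swap)
  also have "\<dots> = (\<Sum>i<n. \<Sum>s\<in>Vs p. ?lr i x (x i) s * (hl i s - hl i (x i)))"
  proof (rule sum.cong[OF refl])
    fix i assume "i \<in> {..<n}"
    then have i: "i < n" by simp
    have hupd: "h (x(i := s)) - h x = hl i s - hl i (x i)" for s
    proof -
      have "h (x(i := s)) - h x = (\<Sum>j<n. hl j ((x(i := s)) j) - hl j (x j))"
        unfolding h_def by (simp add: sum_subtractf)
      also have "\<dots> = (\<Sum>j<n. if j = i then hl i s - hl i (x i) else 0)"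
        by (intro sum.cong refl) auto
      finally show ?thesis using i by simp
    qed
    have "(\<Sum>y\<in>?S - {x}. if x i \<noteq> y i \<and> y = x(i := y i) then ?lr i x (x i) (y i) * (h y - h x) else 0)
        = (\<Sum>y\<in>{y \<in> ?S - {x}. x i \<noteq> y i \<and> y = x(i := y i)}. ?lr i x (x i) (y i) * (h y - h x))"
      by (rule sum.inter_filter[of "?S - {x}" "\<lambda>y. ?lr i x (x i) (y i) * (h y - h x)" "\<lambda>y. x i \<noteq> y i \<and> y = x(i := y i)", symmetric]) (simp add: fin)
    also have "\<dots> = (\<Sum>y\<in>(\<lambda>s. x(i := s)) ` (Vs p - {x i}). ?lr i x (x i) (y i) * (h y - h x))"
      by (simp only: nbr_set[OF x i])
    also have "\<dots> = (\<Sum>s\<in>Vs p - {x i}. ?lr i x (x i) s * (hl i s - hl i (x i)))"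
      by (subst sum.reindex) (auto simp: inj_on_def hupd fun_eq_iff split: if_splits)
    also have "\<dots> = (\<Sum>s\<in>Vs p. ?lr i x (x i) s * (hl i s - hl i (x i)))"
      using sum.remove[OF finite_Vs states_Vs[OF x i], of "\<lambda>s. ?lr i x (x i) s * (hl i s - hl i (x i))"]
      by simp
    finally show "(\<Sum>y\<in>?S - {x}. if x i \<noteq> y i \<and> y = x(i := y i) then ?lr i x (x i) (y i) * (h y - h x) else 0)
        = (\<Sum>s\<in>Vs p. ?lr i x (x i) s * (hl i s - hl i (x i)))" .
  qed
  finally show ?thesis unfolding h_def .
qed

lemma cond1_unpack:
  fixes n p :: nat and A :: "nat \<Rightarrow> nat \<Rightarrow> real" and beta delta :: "nat \<Rightarrow> real"
    and Pi :: "nat \<Rightarrow> nat \<Rightarrow> nat \<Rightarrow> real" and inf0 :: "nat \<Rightarrow> bool" and v :: "nat \<Rightarrow> real"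
  assumes cond1:
      "let Pi' = (\<lambda>i k l. Pi i k l - delta i * idm k l);
           w' = (\<lambda>i k. - (\<Sum>l<p. Pi' i k l));
           J = diagm (\<lambda>i. if inf0 i then 0 else 1);
           B = diagm beta;
           M = madd (bdiag p p (\<lambda>i. transp (Pi' i)))
                    (kron p p (mmul n (mmul n J B) A) (\<lambda>k l. u1 k * ones l));
           W = bdiag 1 p (\<lambda>i. transp (\<lambda>k _. w' i k))
       in \<forall>j<n * p. vmul (n * p) v M j + vmul n ones W j < 0"
    and j: "j < n" and k: "k < p"
  shows "(\<Sum>i<n. v (i * p) * (if inf0 i then 0 else 1) * beta i * A i j)
          + ((\<Sum>l<p. v (j * p + l) * Pi j k l) - delta j * v (j * p + k) + delta j - (\<Sum>l<p. Pi j k l)) < 0"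
proof -
  define idx where "idx = j * p + k"
  have idx: "idx < n * p" "idx div p = j" "idx mod p = k"
  proof -
    have "j * p + k < j * p + p" using k by simp
    also have "\<dots> = Suc j * p" by simp
    also have "\<dots> \<le> n * p" using j by (intro mult_right_mono) auto
    finally show "idx < n * p" unfolding idx_def .
    show "idx div p = j" "idx mod p = k" unfolding idx_def using k by auto
  qed
  have mm: "mmul n (mmul n (diagm (\<lambda>i. if inf0 i then 0 else 1)) (diagm beta)) A i j'
      = (if inf0 i then 0 else 1) * beta i * A i j'" if "i < n" for i j'
  proof -
    have "mmul n (diagm (\<lambda>i. if inf0 i then 0 else (1::real))) (diagm beta) i m = (if i = m then (if inf0 i then 0 else 1) * beta i else 0)"
      if "m < n" for m
      unfolding mmul_def diagm_def using \<open>i < n\<close> by (auto simp: if_distrib cong: if_cong)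
    then show ?thesis unfolding mmul_def[of n _ A] using \<open>i < n\<close>
      by (simp add: if_distrib[of "\<lambda>t. t * _"] cong: if_cong)
  qed
  have vM: "vmul (n * p) v (madd (bdiag p p (\<lambda>i. transp (\<lambda>k l. Pi i k l - delta i * idm k l)))
                    (kron p p (mmul n (mmul n (diagm (\<lambda>i. if inf0 i then 0 else 1)) (diagm beta)) A) (\<lambda>k l. u1 k * ones l))) idx
      = (\<Sum>l<p. v (j * p + l) * Pi j k l) - delta j * v (j * p + k) + (\<Sum>i<n. v (i * p) * (if inf0 i then 0 else 1) * beta i * A i j)"
  proof -
    have "vmul (n * p) v (madd (bdiag p p (\<lambda>i. transp (\<lambda>k l. Pi i k l - delta i * idm k l)))
                    (kron p p (mmul n (mmul n (diagm (\<lambda>i. if inf0 i then 0 else 1)) (diagm beta)) A) (\<lambda>k l. u1 k * ones l))) idx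
       = (\<Sum>i<n. \<Sum>l<p. v (i * p + l) * ((if i = j then Pi i k l - delta i * idm k l else 0)
            + (if inf0 i then 0 else 1) * beta i * A i j * u1 l))"
      unfolding vmul_def sum_split_idx
    proof (intro sum.cong refl)
      fix i l assume "i \<in> {..<n}" "l \<in> {..<p}"
      then have il: "i < n" "l < p" by auto
      then have "(i * p + l) div p = i" "(i * p + l) mod p = l" by auto
      then show "v (i * p + l) * madd (bdiag p p (\<lambda>i. transp (\<lambda>k l. Pi i k l - delta i * idm k l)))
                    (kron p p (mmul n (mmul n (diagm (\<lambda>i. if inf0 i then 0 else 1)) (diagm beta)) A) (\<lambda>k l. u1 k * ones l)) (i * p + l) idx
          = v (i * p + l) * ((if i = j then Pi i k l - delta i * idm k l else 0)
            + (if inf0 i then 0 else 1) * beta i * A i j * u1 l)"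
        using idx mm[OF il(1)] by (cases "i = j") (simp_all add: madd_def bdiag_def kron_def transp_def ones_def)
    qed
    also have "\<dots> = (\<Sum>i<n. \<Sum>l<p. (if i = j then v (i * p + l) * (Pi i k l - delta i * idm k l) else 0))
        + (\<Sum>i<n. \<Sum>l<p. v (i * p + l) * ((if inf0 i then 0 else 1) * beta i * A i j) * u1 l)"
      by (simp add: sum.distrib distrib_left mult.assoc if_distrib[of "\<lambda>t. _ * t"] cong: if_cong)
    also have "(\<Sum>i<n. \<Sum>l<p. (if i = j then v (i * p + l) * (Pi i k l - delta i * idm k l) else 0))
        = (\<Sum>l<p. v (j * p + l) * (Pi j k l - delta j * idm k l))"
      using j by (subst sum.cong[OF refl, where h="\<lambda>i. if i = j then (\<Sum>l<p. v (j * p + l) * (Pi j k l - delta j * idm k l)) else 0"]) auto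
    also have "\<dots> = (\<Sum>l<p. v (j * p + l) * Pi j k l) - delta j * v (j * p + k)"
    proof -
      have e: "(\<Sum>l<p. v (j * p + l) * (delta j * idm k l)) = delta j * v (j * p + k)"
      proof -
        have "(\<Sum>l<p. v (j * p + l) * (delta j * idm k l)) = (\<Sum>l<p. if k = l then delta j * v (j * p + l) else 0)"
          by (intro sum.cong refl) (simp add: idm_def)
        then show ?thesis using k by simp
      qed
      show ?thesis unfolding right_diff_distrib sum_subtractf e ..
    qed
    also have "(\<Sum>i<n. \<Sum>l<p. v (i * p + l) * ((if inf0 i then 0 else 1) * beta i * A i j) * u1 l)
        = (\<Sum>i<n. v (i * p) * (if inf0 i then 0 else 1) * beta i * A i j)"
      using k by (intro sum.cong refl) (simp add: u1_def mult.assoc if_distrib cong: if_cong)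
    finally show ?thesis .
  qed
  have vW: "vmul n ones (bdiag 1 p (\<lambda>i. transp (\<lambda>k _. - (\<Sum>l<p. Pi i k l - delta i * idm k l)))) idx
      = delta j - (\<Sum>l<p. Pi j k l)"
  proof -
    have "vmul n ones (bdiag 1 p (\<lambda>i. transp (\<lambda>k _. - (\<Sum>l<p. Pi i k l - delta i * idm k l)))) idx
      = (\<Sum>i<n. if i = j then - (\<Sum>l<p. Pi j k l - delta j * idm k l) else 0)"
      unfolding vmul_def using idx by (intro sum.cong refl) (simp add: bdiag_def transp_def ones_def)
    also have "\<dots> = - (\<Sum>l<p. Pi j k l - delta j * idm k l)" using j by simp
    also have "\<dots> = delta j - (\<Sum>l<p. Pi j k l)"
      using k by (simp add: sum_subtractf idm_def sum_distrib_left[symmetric])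
    finally show ?thesis .
  qed
  from cond1 idx(1) have "vmul (n * p) v (madd (bdiag p p (\<lambda>i. transp (\<lambda>k l. Pi i k l - delta i * idm k l)))
                    (kron p p (mmul n (mmul n (diagm (\<lambda>i. if inf0 i then 0 else 1)) (diagm beta)) A) (\<lambda>k l. u1 k * ones l))) idx
     + vmul n ones (bdiag 1 p (\<lambda>i. transp (\<lambda>k _. - (\<Sum>l<p. Pi i k l - delta i * idm k l)))) idx < 0"
    unfolding Let_def by blast
  then show ?thesis unfolding vM vW by simp
qed

locale sirm =
  fixes n p :: nat and A :: "nat \<Rightarrow> nat \<Rightarrow> real" and beta delta :: "nat \<Rightarrow> real"
    and Pi :: "nat \<Rightarrow> nat \<Rightarrow> nat \<Rightarrow> real" and inf0 :: "nat \<Rightarrow> bool" and v :: "nat \<Rightarrow> real"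
  assumes p_pos: "p \<ge> 1"
    and A_adj: "\<forall>i<n. \<forall>j<n. A i j \<in> {0, 1}"
    and beta_pos: "\<forall>i<n. beta i > 0"
    and delta_pos: "\<forall>i<n. delta i > 0"
    and Pi_metzler: "\<forall>i<n. metzler p (Pi i)"
    and Pi_rows: "\<forall>i<n. \<forall>k<p. (\<Sum>l<p. Pi i k l) \<le> 0"
    and v_pos: "\<forall>k<n * p. v k > 0"
    and c1: "\<And>j k. j < n \<Longrightarrow> k < p \<Longrightarrow> (\<Sum>i<n. v (i * p) * (if inf0 i then 0 else 1) * beta i * A i j)
          + ((\<Sum>l<p. v (j * p + l) * Pi j k l) - delta j * v (j * p + k) + delta j - (\<Sum>l<p. Pi j k l)) < 0"
begin

abbreviation "S \<equiv> states n p"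
abbreviation "Q \<equiv> gen n p A beta delta Pi"
abbreviation "lr \<equiv> lrate n p A beta delta Pi"
abbreviation "rt \<equiv> rate n p A beta delta Pi"

lemma lr_nonneg:
  assumes x: "x \<in> S" and i: "i < n"
  shows "0 \<le> lr i x (x i) s"
proof -
  have xi: "x i \<in> Vs p" by (rule states_Vs[OF x i])
  have Anonneg: "0 \<le> A i j" if "j < n" for j
  proof -
    have "A i j \<in> {0, 1}" using A_adj i that by blast
    then show ?thesis by auto
  qed
  show ?thesis
  proof (cases "x i")
    case Sus
    then show ?thesis
      using beta_pos i Anonneg
      by (cases s) (auto simp: lrate_def intro!: mult_nonneg_nonneg sum_nonneg)
  next
    case (Inf k)
    then have k: "k < p" using xi by (auto simp: Vs_def)
    have "0 \<le> Pi i k l" if "l \<noteq> k" "l < p" for l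
      using Pi_metzler i k that by (auto simp: metzler_def)
    moreover have "0 \<le> delta i - (\<Sum>l<p. Pi i k l)"
      using Pi_rows delta_pos i k by (smt (verit))
    ultimately show ?thesis using Inf by (cases s) (auto simp: lrate_def)
  next
    case Rem
    then show ?thesis by (simp add: lrate_def)
  qed
qed

lemma rt_nonneg: "x \<in> S \<Longrightarrow> 0 \<le> rt x y"
  unfolding rate_def by (intro sum_nonneg) (auto intro: lr_nonneg)

definition cc where "cc = 1 + (\<Sum>x\<in>S. \<Sum>z\<in>S - {x}. rt x z)"
definition K where "K x y = (if x = y then 1 else 0) + Q x y / cc"

lemma outer_nonneg: "0 \<le> (\<Sum>x\<in>S. \<Sum>z\<in>S - {x}. rt x z)"
  by (intro sum_nonneg) (auto intro: rt_nonneg)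

lemma cc_pos: "cc > 0"
  unfolding cc_def using outer_nonneg by simp

lemma row_le: "x \<in> S \<Longrightarrow> (\<Sum>z\<in>S - {x}. rt x z) \<le> cc"
proof -
  assume x: "x \<in> S"
  have "(\<Sum>z\<in>S - {x}. rt x z) \<le> (\<Sum>x\<in>S. \<Sum>z\<in>S - {x}. rt x z)"
    by (rule member_le_sum[OF x]) (auto intro!: sum_nonneg rt_nonneg simp: finite_states)
  then show ?thesis unfolding cc_def by simp
qed

lemma Q_row: "x \<in> S \<Longrightarrow> (\<Sum>y\<in>S. Q x y) = 0"
proof -
  assume x: "x \<in> S"
  have "(\<Sum>y\<in>S. Q x y) = Q x x + (\<Sum>y\<in>S - {x}. Q x y)"
    by (rule sum.remove[OF finite_states x])
  also have "(\<Sum>y\<in>S - {x}. Q x y) = (\<Sum>y\<in>S - {x}. rt x y)"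
    by (intro sum.cong refl) (auto simp: gen_def)
  finally show ?thesis by (simp add: gen_def)
qed

lemma K_nonneg: "x \<in> S \<Longrightarrow> y \<in> S \<Longrightarrow> 0 \<le> K x y"
proof -
  assume x: "x \<in> S" and y: "y \<in> S"
  show "0 \<le> K x y"
  proof (cases "x = y")
    case True
    have "(\<Sum>z\<in>S - {x}. rt x z) / cc \<le> 1" using row_le[OF x] cc_pos by simp
    then show ?thesis using True by (simp add: K_def gen_def)
  next
    case False
    then show ?thesis using rt_nonneg[OF x, of y] cc_pos by (simp add: K_def gen_def)
  qed
qed

lemma K_apply: "x \<in> S \<Longrightarrow> (\<Sum>y\<in>S. K x y * h y) = h x + (\<Sum>y\<in>S. Q x y * h y) / cc"
proof -
  assume x: "x \<in> S"
  have "(\<Sum>y\<in>S. K x y * h y) = (\<Sum>y\<in>S. (if x = y then h y else 0)) + (\<Sum>y\<in>S. Q x y * h y / cc)"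
    unfolding K_def by (simp add: distrib_right sum.distrib if_distrib[of "\<lambda>t. t * _"] cong: if_cong)
  also have "\<dots> = h x + (\<Sum>y\<in>S. Q x y * h y) / cc"
    using x finite_states by (simp add: sum_divide_distrib)
  finally show ?thesis .
qed

lemma K_row: "x \<in> S \<Longrightarrow> (\<Sum>y\<in>S. K x y) = 1"
  using K_apply[of x "\<lambda>_. 1"] Q_row by simp

end

context sirm begin

definition hr :: "nat \<Rightarrow> lstate \<Rightarrow> real" where "hr i s = (if s = Rem then 1 else 0)"
definition hg :: "nat \<Rightarrow> lstate \<Rightarrow> real" where
  "hg i s = (case s of Sus \<Rightarrow> 0 | Rem \<Rightarrow> 1 | Inf k \<Rightarrow> v (i * p + k))"
definition rr where "rr y = (\<Sum>i<n. hr i (y i))"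
definition gg where "gg y = (\<Sum>i<n. hg i (y i))"
definition D where "D = {x \<in> S. \<forall>i<n. inf0 i \<longrightarrow> x i \<noteq> Sus}"
definition Cc where "Cc j k = (\<Sum>l<p. v (j * p + l) * Pi j k l) - delta j * v (j * p + k) + delta j - (\<Sum>l<p. Pi j k l)"

lemma lr_Rem: "lr i x Rem s = 0" by (simp add: lrate_def)
lemma lr_to_Sus: "lr i x s Sus = 0" by (cases s) (simp_all add: lrate_def)

lemma Qr_nonneg:
  assumes x: "x \<in> S"
  shows "0 \<le> (\<Sum>y\<in>S. Q x y * rr y)"
proof -
  have "(\<Sum>y\<in>S. Q x y * rr y) = (\<Sum>i<n. \<Sum>s\<in>Vs p. lr i x (x i) s * (hr i s - hr i (x i)))"
    unfolding rr_def by (rule gen_additive[OF x])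
  also have "\<dots> \<ge> 0"
  proof (intro sum_nonneg)
    fix i s assume "i \<in> {..<n}"
    then have i: "i < n" by simp
    show "0 \<le> lr i x (x i) s * (hr i s - hr i (x i))"
    proof (cases "x i = Rem")
      case True then show ?thesis by (simp add: lr_Rem)
    next
      case False then show ?thesis using lr_nonneg[OF x i, of s] by (simp add: hr_def)
    qed
  qed
  finally show ?thesis .
qed

lemma local_g:
  assumes x: "x \<in> S" and i: "i < n"
  shows "(\<Sum>s\<in>Vs p. lr i x (x i) s * (hg i s - hg i (x i)))
     = (if x i = Sus then beta i * (\<Sum>j<n. A i j * (if is_inf (x j) then 1 else 0)) * v (i * p) else 0)
       + (case x i of Inf k \<Rightarrow> Cc i k | _ \<Rightarrow> 0)"
proof -
  have xi: "x i \<in> Vs p" by (rule states_Vs[OF x i])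
  show ?thesis
  proof (cases "x i")
    case Sus
    have "(\<Sum>l<p. lr i x (x i) (Inf l) * (hg i (Inf l) - hg i (x i)))
        = (\<Sum>l<p. if l = 0 then beta i * (\<Sum>j<n. A i j * (if is_inf (x j) then 1 else 0)) * v (i * p) else 0)"
      using Sus by (intro sum.cong refl) (simp add: lrate_def hg_def)
    also have "\<dots> = beta i * (\<Sum>j<n. A i j * (if is_inf (x j) then 1 else 0)) * v (i * p)"
      using p_pos by simp
    finally show ?thesis unfolding sum_Vs using Sus by (simp add: lrate_def hg_def)
  next
    case (Inf k)
    then have k: "k < p" using xi by (auto simp: Vs_def)
    have "(\<Sum>l<p. lr i x (x i) (Inf l) * (hg i (Inf l) - hg i (x i)))
        = (\<Sum>l<p. Pi i k l * (v (i * p + l) - v (i * p + k)))"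
      using Inf by (intro sum.cong refl) (auto simp: lrate_def hg_def)
    also have "\<dots> = (\<Sum>l<p. v (i * p + l) * Pi i k l) - (\<Sum>l<p. Pi i k l) * v (i * p + k)"
      by (simp add: right_diff_distrib sum_subtractf sum_distrib_right mult.commute)
    finally have e: "(\<Sum>l<p. lr i x (x i) (Inf l) * (hg i (Inf l) - hg i (x i)))
        = (\<Sum>l<p. v (i * p + l) * Pi i k l) - (\<Sum>l<p. Pi i k l) * v (i * p + k)" .
    have r: "lr i x (x i) Rem * (hg i Rem - hg i (x i)) = (delta i - (\<Sum>l<p. Pi i k l)) * (1 - v (i * p + k))"
      using Inf by (simp add: lrate_def hg_def)
    show ?thesis unfolding sum_Vs e r using Inf
      by (simp add: lr_to_Sus Cc_def algebra_simps)
  next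
    case Rem
    then show ?thesis by (simp add: lr_Rem)
  qed
qed

lemma Qg_nonpos:
  assumes x: "x \<in> S" and xD: "x \<in> D"
  shows "(\<Sum>y\<in>S. Q x y * gg y) \<le> 0"
proof -
  define I where "I j = (if is_inf (x j) then 1 else (0::real))" for j
  define E where "E j = (\<Sum>i<n. v (i * p) * (if inf0 i then 0 else 1) * beta i * A i j)" for j
  have Anonneg: "0 \<le> A i j" if "i < n" "j < n" for i j
  proof -
    have "A i j \<in> {0, 1}" using A_adj that by blast
    then show ?thesis by auto
  qed
  have vnn: "0 \<le> v (i * p)" if "i < n" for i
  proof -
    have "i * p + 0 < i * p + p" using p_pos by simp
    also have "\<dots> = Suc i * p" by simp
    also have "\<dots> \<le> n * p" using that by (intro mult_right_mono) auto
    finally have "i * p + 0 < n * p" .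
    then have "v (i * p + 0) > 0" using v_pos by blast
    then show ?thesis by simp
  qed
  have "(\<Sum>y\<in>S. Q x y * gg y) = (\<Sum>i<n. \<Sum>s\<in>Vs p. lr i x (x i) s * (hg i s - hg i (x i)))"
    unfolding gg_def by (rule gen_additive[OF x])
  also have "\<dots> = (\<Sum>i<n. (if x i = Sus then beta i * (\<Sum>j<n. A i j * I j) * v (i * p) else 0))
       + (\<Sum>i<n. (case x i of Inf k \<Rightarrow> Cc i k | _ \<Rightarrow> 0))"
    unfolding sum.distrib[symmetric] I_def by (intro sum.cong refl local_g[OF x]) auto
  also have "(\<Sum>i<n. (if x i = Sus then beta i * (\<Sum>j<n. A i j * I j) * v (i * p) else 0))
      \<le> (\<Sum>i<n. \<Sum>j<n. v (i * p) * (if inf0 i then 0 else 1) * beta i * A i j * I j)"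
  proof (rule sum_mono)
    fix i assume "i \<in> {..<n}"
    then have i: "i < n" by simp
    show "(if x i = Sus then beta i * (\<Sum>j<n. A i j * I j) * v (i * p) else 0)
      \<le> (\<Sum>j<n. v (i * p) * (if inf0 i then 0 else 1) * beta i * A i j * I j)"
    proof (cases "x i = Sus")
      case True
      then have "\<not> inf0 i" using xD i by (auto simp: D_def)
      then show ?thesis using True by (simp add: sum_distrib_left sum_distrib_right mult_ac)
    next
      case False
      have "0 \<le> (\<Sum>j<n. v (i * p) * (if inf0 i then 0 else 1) * beta i * A i j * I j)"
        using vnn[OF i] beta_pos i Anonneg[OF i]
        by (intro sum_nonneg) (auto simp: I_def intro!: mult_nonneg_nonneg)
      then show ?thesis using False by simp
    qed
  qed
  also have "(\<Sum>i<n. \<Sum>j<n. v (i * p) * (if inf0 i then 0 else 1) * beta i * A i j * I j) = (\<Sum>j<n. I j * E j)"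
    unfolding E_def by (subst sum.swap) (simp add: sum_distrib_left mult_ac)
  finally have le: "(\<Sum>y\<in>S. Q x y * gg y) \<le> (\<Sum>j<n. I j * E j + (case x j of Inf k \<Rightarrow> Cc j k | _ \<Rightarrow> 0))"
    by (simp add: sum.distrib)
  also have "\<dots> \<le> 0"
  proof (intro sum_nonpos)
    fix j assume "j \<in> {..<n}"
    then have j: "j < n" by simp
    show "I j * E j + (case x j of Inf k \<Rightarrow> Cc j k | _ \<Rightarrow> 0) \<le> 0"
    proof (cases "x j")
      case (Inf k)
      then have k: "k < p" using states_Vs[OF x j] by (auto simp: Vs_def)
      show ?thesis using c1[OF j k] Inf by (simp add: I_def is_inf_def E_def Cc_def)
    qed (simp_all add: I_def is_inf_def)
  qed
  finally show ?thesis .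
qed

lemma D_closed:
  assumes x: "x \<in> D" and z: "z \<in> S" "z \<notin> D"
  shows "K x z = 0"
proof -
  have xS: "x \<in> S" using x by (simp add: D_def)
  obtain i' where i': "i' < n" "inf0 i'" "z i' = Sus" using z by (auto simp: D_def)
  have xi': "x i' \<noteq> Sus" using x i' by (auto simp: D_def)
  then have xz: "x \<noteq> z" using i' by auto
  have "rt x z = 0"
    unfolding rate_def
  proof (intro sum.neutral ballI)
    fix i assume "i \<in> {..<n}"
    show "(if x i \<noteq> z i \<and> z = x(i := z i) then lr i x (x i) (z i) else 0) = 0"
    proof (cases "i = i'")
      case True then show ?thesis using i' by (simp add: lr_to_Sus)
    next
      case False
      have "z \<noteq> x(i := z i)"
      proof
        assume "z = x(i := z i)"
        then have "z i' = x i'" using False by (metis fun_upd_other)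
        then show False using i' xi' by simp
      qed
      then show ?thesis by simp
    qed
  qed
  then show ?thesis using xz by (simp add: K_def gen_def)
qed

end

context sirm begin

abbreviation "x0 \<equiv> init_state n inf0"

lemma x0_S: "x0 \<in> S"
  unfolding states_def init_state_def using p_pos by auto

lemma x0_D: "x0 \<in> D"
  using x0_S unfolding D_def init_state_def by auto

lemma Kpow_nonneg: "x \<in> S \<Longrightarrow> y \<in> S \<Longrightarrow> 0 \<le> mpow S K j x y"
  by (rule Kpow_bounds(1)[OF finite_states K_nonneg K_row])

lemma Kg: "x \<in> D \<Longrightarrow> (\<Sum>y\<in>S. mpow S K j x y * gg y) \<le> gg x"
proof (induction j arbitrary: x)
  case 0
  then have xS: "x \<in> S" by (simp add: D_def)
  have "(\<Sum>y\<in>S. mpow S K 0 x y * gg y) = (\<Sum>y\<in>S. if x = y then gg y else 0)"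
    by (intro sum.cong refl) simp
  then show ?case using xS finite_states by simp
next
  case (Suc j)
  then have xS: "x \<in> S" by (simp add: D_def)
  have "(\<Sum>y\<in>S. mpow S K (Suc j) x y * gg y) = (\<Sum>y\<in>S. (\<Sum>z\<in>S. K x z * mpow S K j z y) * gg y)"
    by (intro sum.cong refl, subst mpow_Suc_left[OF finite_states xS]) auto
  also have "\<dots> = (\<Sum>y\<in>S. \<Sum>z\<in>S. K x z * (mpow S K j z y * gg y))"
    by (simp add: sum_distrib_right mult.assoc)
  also have "\<dots> = (\<Sum>z\<in>S. K x z * (\<Sum>y\<in>S. mpow S K j z y * gg y))"
    by (subst sum.swap) (simp add: sum_distrib_left)
  also have "\<dots> \<le> (\<Sum>z\<in>S. K x z * gg z)"
  proof (rule sum_mono)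
    fix z assume z: "z \<in> S"
    show "K x z * (\<Sum>y\<in>S. mpow S K j z y * gg y) \<le> K x z * gg z"
    proof (cases "z \<in> D")
      case True
      show ?thesis using Suc.IH[OF True] K_nonneg[OF xS z] by (rule mult_left_mono)
    next
      case False
      then show ?thesis using D_closed[OF Suc.prems z False] by simp
    qed
  qed
  also have "\<dots> = gg x + (\<Sum>z\<in>S. Q x z * gg z) / cc" by (rule K_apply[OF xS])
  also have "\<dots> \<le> gg x" using Qg_nonpos[OF xS Suc.prems] cc_pos by (simp add: divide_nonpos_pos)
  finally show ?case .
qed

lemma rr_le_gg: "y \<in> S \<Longrightarrow> rr y \<le> gg y"
  unfolding rr_def gg_def
proof (rule sum_mono)
  fix i assume y: "y \<in> S" and "i \<in> {..<n}"
  then have i: "i < n" by simp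
  show "hr i (y i) \<le> hg i (y i)"
  proof (cases "y i")
    case (Inf k)
    then have k: "k < p" using states_Vs[OF y i] by (auto simp: Vs_def)
    have "i * p + k < i * p + p" using k by simp
    also have "\<dots> = Suc i * p" by simp
    also have "\<dots> \<le> n * p" using i by (intro mult_right_mono) auto
    finally have "v (i * p + k) > 0" using v_pos by blast
    then show ?thesis using Inf by (simp add: hr_def hg_def)
  qed (simp_all add: hr_def hg_def)
qed

definition bb where "bb j = (\<Sum>y\<in>S. mpow S K j x0 y * rr y)"

lemma bb_mono: "bb j \<le> bb (Suc j)"
proof -
  have "bb (Suc j) = (\<Sum>y\<in>S. \<Sum>z\<in>S. mpow S K j x0 z * (K z y * rr y))"
    unfolding bb_def by (simp add: sum_distrib_right mult.assoc)
  also have "\<dots> = (\<Sum>z\<in>S. mpow S K j x0 z * (\<Sum>y\<in>S. K z y * rr y))"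
    by (subst sum.swap) (simp add: sum_distrib_left)
  also have "\<dots> \<ge> (\<Sum>z\<in>S. mpow S K j x0 z * rr z)"
  proof (rule sum_mono)
    fix z assume z: "z \<in> S"
    have "rr z \<le> (\<Sum>y\<in>S. K z y * rr y)"
      using K_apply[OF z, of rr] Qr_nonneg[OF z] cc_pos by simp
    then show "mpow S K j x0 z * rr z \<le> mpow S K j x0 z * (\<Sum>y\<in>S. K z y * rr y)"
      using Kpow_nonneg[OF x0_S z] by (rule mult_left_mono)
  qed
  finally show ?thesis unfolding bb_def .
qed

lemma bb_le: "bb j \<le> gg x0"
proof -
  have "bb j \<le> (\<Sum>y\<in>S. mpow S K j x0 y * gg y)"
    unfolding bb_def using Kpow_nonneg[OF x0_S] rr_le_gg
    by (intro sum_mono mult_left_mono) auto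
  also have "\<dots> \<le> gg x0" by (rule Kg[OF x0_D])
  finally show ?thesis .
qed

lemma card_rr: "y \<in> S \<Longrightarrow> real (card {i. i < n \<and> y i = Rem}) = rr y"
proof -
  have "rr y = (\<Sum>i\<in>{i \<in> {..<n}. y i = Rem}. 1)"
    unfolding rr_def hr_def by (rule sum.inter_filter[symmetric]) simp
  also have "{i \<in> {..<n}. y i = Rem} = {i. i < n \<and> y i = Rem}" by auto
  finally show ?thesis by simp
qed

lemma exp_removed_eq:
  "exp_removed n p A beta delta Pi inf0 t = exp (- (cc * t)) * (\<Sum>j. (cc * t) ^ j / fact j * bb j)"
proof -
  let ?a = "\<lambda>y j. (cc * t) ^ j / fact j * mpow S K j x0 y"
  have U: "summable (?a y)" "trans_prob S Q t x0 y = exp (- (cc * t)) * suminf (?a y)" if "y \<in> S" for y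
    using uniformization[OF finite_states cc_pos K_def K_nonneg K_row x0_S that] by auto
  have "exp_removed n p A beta delta Pi inf0 t = (\<Sum>y\<in>S. exp (- (cc * t)) * suminf (?a y) * rr y)"
    unfolding exp_removed_def by (intro sum.cong refl) (simp add: U card_rr)
  also have "\<dots> = exp (- (cc * t)) * (\<Sum>y\<in>S. \<Sum>j. ?a y j * rr y)"
    using U(1) by (simp add: sum_distrib_left suminf_mult2 mult.assoc)
  also have "(\<Sum>y\<in>S. \<Sum>j. ?a y j * rr y) = (\<Sum>j. \<Sum>y\<in>S. ?a y j * rr y)"
    by (rule suminf_sum[symmetric]) (intro summable_mult2 U(1))
  also have "\<dots> = (\<Sum>j. (cc * t) ^ j / fact j * bb j)"
    unfolding bb_def by (simp add: sum_distrib_left mult.assoc)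
  finally show ?thesis .
qed

lemma lim_le: "Lim at_top (exp_removed n p A beta delta Pi inf0) \<le> gg x0"
proof -
  have inc: "incseq bb" using bb_mono by (simp add: incseq_SucI)
  have bnd: "\<forall>j. bb j \<le> gg x0" using bb_le by blast
  obtain L where "\<forall>j. bb j \<le> L" "L \<le> gg x0"
    and lim: "((\<lambda>t. exp (- (cc * t)) * (\<Sum>j. (cc * t) ^ j / fact j * bb j)) \<longlongrightarrow> L) at_top"
    by (rule poisson_limit[OF cc_pos inc bnd])
  have "Lim at_top (exp_removed n p A beta delta Pi inf0) = L"
    using lim unfolding exp_removed_eq[abs_def] by (intro tendsto_Lim) auto
  then show ?thesis using \<open>L \<le> gg x0\<close> by simp
qed

lemma gg_x0: "gg x0 = (\<Sum>i<n. if inf0 i then v (i * p) else 0)"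
  unfolding gg_def hg_def init_state_def by (intro sum.cong refl) auto

end

theorem proposition3:
  fixes n p :: nat
    and A :: "nat \<Rightarrow> nat \<Rightarrow> real"
    and beta delta :: "nat \<Rightarrow> real"
    and Pi :: "nat \<Rightarrow> nat \<Rightarrow> nat \<Rightarrow> real"
    and inf0 :: "nat \<Rightarrow> bool"
    and v :: "nat \<Rightarrow> real"
    and lbar :: real
  assumes n_pos: "n \<ge> 1" and p_pos: "p \<ge> 1"
    and A_adj: "\<forall>i<n. \<forall>j<n. A i j \<in> {0, 1}"
    and A_sym: "\<forall>i<n. \<forall>j<n. A i j = A j i"
    and beta_pos: "\<forall>i<n. beta i > 0"
    and delta_pos: "\<forall>i<n. delta i > 0"
    and Pi_metzler: "\<forall>i<n. metzler p (Pi i)"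
    and Pi_rows: "\<forall>i<n. \<forall>k<p. (\<Sum>l<p. Pi i k l) \<le> 0"
    and Pi_inv: "\<forall>i<n. invertible_sq p (Pi i)"
    and lbar_pos: "lbar > 0"
    and v_pos: "\<forall>k<n * p. v k > 0"
    and cond1:
      "let Pi' = (\<lambda>i k l. Pi i k l - delta i * idm k l);
           w' = (\<lambda>i k. - (\<Sum>l<p. Pi' i k l));
           J = diagm (\<lambda>i. if inf0 i then 0 else 1);
           B = diagm beta;
           M = madd (bdiag p p (\<lambda>i. transp (Pi' i)))
                    (kron p p (mmul n (mmul n J B) A) (\<lambda>k l. u1 k * ones l));
           W = bdiag 1 p (\<lambda>i. transp (\<lambda>k _. w' i k))
       in \<forall>j<n * p. vmul (n * p) v M j + vmul n ones W j < 0"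
    and cond2:
      "(\<Sum>k<n * p. v k * (if inf0 (k div p) then u1 (k mod p) else 0)) < lbar + sigmaI0 n inf0"
  shows "epidemic_lambda n p A beta delta Pi inf0 < lbar"
proof -
  interpret sirm n p A beta delta Pi inf0 v
    using p_pos A_adj beta_pos delta_pos Pi_metzler Pi_rows v_pos cond1_unpack[OF cond1]
    by unfold_locales auto
  have L: "Lim at_top (exp_removed n p A beta delta Pi inf0) \<le> gg (init_state n inf0)"
    by (rule lim_le)
  have "(\<Sum>k<n * p. v k * (if inf0 (k div p) then u1 (k mod p) else 0))
      = (\<Sum>i<n. \<Sum>l<p. v (i * p + l) * (if inf0 i then u1 l else 0))"
    unfolding sum_split_idx by (intro sum.cong refl) auto
  also have "\<dots> = (\<Sum>i<n. if inf0 i then v (i * p) else 0)"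
  proof (intro sum.cong refl)
    fix i
    have "(\<Sum>l<p. v (i * p + l) * (if inf0 i then u1 l else 0)) = (\<Sum>l<p. if l = 0 then (if inf0 i then v (i * p) else 0) else 0)"
      by (intro sum.cong refl) (auto simp: u1_def)
    then show "(\<Sum>l<p. v (i * p + l) * (if inf0 i then u1 l else 0)) = (if inf0 i then v (i * p) else 0)"
      using p_pos by simp
  qed
  also have "\<dots> = gg (init_state n inf0)" by (rule gg_x0[symmetric])
  finally have "gg (init_state n inf0) < lbar + sigmaI0 n inf0" using cond2 by simp
  then show ?thesis using L unfolding epidemic_lambda_def by simp
qed

end
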